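(* For every $n\in\mathbb N$, there exist infinitely many natural numbers that are antipalindromic in at least $n$ distinct integer bases $b\ge 2$.
   Context: For an integer $b\ge 2$, every natural number $x$ has a unique base-$b$ expansion $x=a_\ell b^\ell+\dots+a_1b+a_0$ with $a_0,\dots,a_\ell\in\{0,1,\dots,b-1\}$ and $a_\ell\neq 0$. The number $x$ is antipalindromic in base $b$ if $a_j=b-1-a_{\ell-j}$ for all $j\in\{0,1,\dots,\ell\}$. *)

theory Defs
  imports Main
begin

fun digits :: "nat \<Rightarrow> nat \<Rightarrow> nat list" where
  "digits b x = (if b < 2 \<or> x = 0 then [] else x mod b # digits b (x div b))"

definition antipalindromic :: "nat \<Rightarrow> nat \<Rightarrow> bool" where
  "antipalindromic b x \<longleftrightarrow> 2 \<le> b \<and> 0 < x \<and>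
     (let ds = digits b x; l = length ds - 1 in
        \<forall>j\<le>l. ds ! j = b - 1 - ds ! (l - j))"

end

theory Submission
  imports Defs
begin

lemma digits_two:
  assumes "2 \<le> b" "b \<le> x" "x < b * b"
  shows "digits b x = [x mod b, x div b]"
proof -
  have "x div b > 0" using assms by (simp add: div_greater_zero_iff)
  moreover have "x div b < b" using assms by (simp add: div_less_iff_less_mult)
  ultimately have "digits b (x div b) = [x div b]"
    using assms by (subst digits.simps, simp)
  moreover have "x \<noteq> 0" using assms by simp
  ultimately show ?thesis using assms by (subst digits.simps, simp)
qed

lemma anti_two:
  fixes c d :: nat
  assumes "1 \<le> d" "2 \<le> c" "c \<le> d + 1"
  shows "antipalindromic (d+1) (c*d)"
proof -
  have eq: "c*d = (d+1-c) + (c-1)*(d+1)" using assms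
    by (cases c) (auto simp: algebra_simps)
  have m: "c*d mod (d+1) = d+1-c" using assms
    by (simp only: eq mod_mult_self1) (simp add: mod_less)
  have dv: "c*d div (d+1) = c-1" using assms
    by (simp only: eq div_mult_self1) simp
  have "d+1 \<le> c*d"
  proof -
    have "2*d \<le> c*d" using assms by simp
    thus ?thesis using assms by linarith
  qed
  moreover have "c*d < (d+1)*(d+1)"
  proof -
    have "c*d \<le> (d+1)*d" using assms(3) by (rule mult_le_mono1)
    also have "\<dots> < (d+1)*(d+1)" by simp
    finally show ?thesis .
  qed
  ultimately have ds: "digits (d+1) (c*d) = [d+1-c, c-1]"
    using digits_two[of "d+1" "c*d"] assms m dv by simp
  have pos: "0 < c*d" using assms by simp
  show ?thesis unfolding antipalindromic_def Let_def ds using assms pos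
    by (auto simp: le_Suc_eq)
qed

theorem mainTheorem14:
  fixes n :: nat
  shows "infinite {x :: nat. \<exists>B :: nat set. card B = n \<and> finite B \<and> (\<forall>b\<in>B. 2 \<le> b \<and> antipalindromic b x)}"
proof -
  let ?f = "\<lambda>m::nat. (m * fact n)^2 :: nat"
  have sub: "?f ` {2..} \<subseteq> {x :: nat. \<exists>B :: nat set. card B = n \<and> finite B \<and> (\<forall>b\<in>B. 2 \<le> b \<and> antipalindromic b x)}"
  proof
    fix x assume "x \<in> ?f ` {2..}"
    then obtain m where m: "m \<ge> 2" "x = (m * fact n)^2" by auto
    define B where "B = (\<lambda>i. m * fact n * i + 1) ` {1..n}"
    have fpos: "(fact n :: nat) > 0" by simp
    have inj: "inj_on (\<lambda>i. m * fact n * i + 1) {1..n}"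
      using m fpos by (auto simp: inj_on_def)
    have cardB: "card B = n" unfolding B_def using card_image[OF inj] by simp
    have "\<forall>b\<in>B. 2 \<le> b \<and> antipalindromic b x"
    proof
      fix b assume "b \<in> B"
      then obtain i where i: "1 \<le> i" "i \<le> n" "b = m * fact n * i + 1"
        unfolding B_def by auto
      have idv: "i dvd fact n" using i by (simp add: dvd_fact)
      define c where "c = m * (fact n div i)"
      define d where "d = m * fact n * i"
      have q: "fact n div i \<ge> 1" using idv i fpos
        by (metis dvd_div_eq_0_iff less_one not_less not_gr0 fact_nonzero)
      have q2: "fact n div i \<le> fact n" by simp
      have d1: "1 \<le> d" unfolding d_def using m i fpos by simp
      have c2: "2 \<le> c" unfolding c_def using m q
        by (metis mult_le_mono mult.right_neutral)
      have "c \<le> m * fact n" unfolding c_def using q2 by simp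
      also have "\<dots> \<le> d" unfolding d_def using i by simp
      finally have cd: "c \<le> d + 1" by simp
      have "c * d = x"
      proof -
        have "(fact n div i) * i = fact n" using idv by simp
        hence "c * d = m * m * ((fact n div i) * i) * fact n" unfolding c_def d_def
          by (simp add: algebra_simps)
        also have "\<dots> = x" using m \<open>(fact n div i) * i = fact n\<close>
          by (simp add: power2_eq_square algebra_simps)
        finally show ?thesis .
      qed
      moreover have "b = d + 1" using i d_def by simp
      ultimately show "2 \<le> b \<and> antipalindromic b x"
        using anti_two[OF d1 c2 cd] d1 by simp
    qed
    moreover have "finite B" unfolding B_def by simp
    ultimately show "x \<in> {x :: nat. \<exists>B :: nat set. card B = n \<and> finite B \<and> (\<forall>b\<in>B. 2 \<le> b \<and> antipalindromic b x)}"
      using cardB by blast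
  qed
  have injf: "inj_on ?f {2..}"
  proof (rule inj_onI)
    fix a b :: nat assume h: "(a * fact n)^2 = (b * fact n)^2"
    have "a * fact n = b * fact n" using power_eq_imp_eq_base[OF h] by simp
    thus "a = b" by simp
  qed
  have "infinite (?f ` {2..})"
    using finite_imageD[OF _ injf] infinite_Ici[of "2::nat"] by blast
  thus ?thesis using sub infinite_super by blast
qed

end
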